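(* Let $f:\mathbb{R}^d\to\mathbb{R}$ be $L_0$-Lipschitz and $L_1$-smooth and let $f'$ be measurable with $\sup_x|f(x)-f'(x)|\le\nu$. Let $F'(x,t)=\mathbb{E}_{u\sim\mathcal{N}(0,\mathrm{I}_d)}[f'(x+tu)]$. Then for every $x\in\mathbb{R}^d$ and every $t>0$, $\|\nabla f(x)\|^2\le 4\|\nabla_xF'(x,t)\|^2+\frac{t^2}{2}L_1^2(d+6)^3+\frac{8}{\pi}\frac{\nu^2}{t^2}$.
   Context: $L_0$-Lipschitz: $|f(x)-f(y)|\le L_0\|x-y\|$; $L_1$-smooth: $\|\nabla f(x)-\nabla f(y)\|\le L_1\|x-y\|$; $\|\cdot\|$ Euclidean norm. *)

theory Defs
  imports "HOL-Analysis.Analysis"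
begin

definition std_gauss_density :: "'a::euclidean_space \<Rightarrow> real" where
  "std_gauss_density u = (2 * pi) powr (- real DIM('a) / 2) * exp (- (norm u)\<^sup>2 / 2)"

definition std_gauss :: "'a::euclidean_space measure" where
  "std_gauss = density lborel (\<lambda>u. ennreal (std_gauss_density u))"

definition gauss_smooth :: "('a::euclidean_space \<Rightarrow> real) \<Rightarrow> 'a \<Rightarrow> real \<Rightarrow> real" where
  "gauss_smooth g x t = (\<integral>u. g (x + t *\<^sub>R u) \<partial>std_gauss)"

end

theory Submission imports Defs "HOL-Probability.Distributions" begin

lemma norm2_sum_basis: "(norm (u::'a::euclidean_space))\<^sup>2 = (\<Sum>b\<in>Basis. (u \<bullet> b)\<^sup>2)"
  unfolding power2_norm_eq_inner by (subst euclidean_inner) (simp add: power2_eq_square)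

lemma gauss_density_prod:
  "std_gauss_density (u::'a::euclidean_space) = (\<Prod>b\<in>Basis. std_normal_density (u \<bullet> b))"
proof -
  have "(\<Prod>b\<in>Basis. std_normal_density (u \<bullet> b)) =
     (\<Prod>b\<in>(Basis::'a set). 1 / sqrt (2*pi)) * (\<Prod>b\<in>Basis. exp (- (u \<bullet> b)\<^sup>2 / 2))"
    by (simp only: std_normal_density_def prod.distrib)
  also have "(\<Prod>b\<in>(Basis::'a set). 1 / sqrt (2*pi)) = (2*pi) powr (- real DIM('a) / 2)"
  proof -
    have h: "1 / sqrt (2*pi) = (2*pi) powr (-1/2)"
      by (simp add: powr_minus_divide powr_half_sqrt)
    have "(\<Prod>b\<in>(Basis::'a set). 1 / sqrt (2*pi)) = ((2*pi) powr (-1/2)) ^ DIM('a)"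
      by (simp only: h prod_constant)
    also have "((2*pi) powr (-1/2)) ^ DIM('a) = (2*pi) powr (- real DIM('a) / 2)"
      by (subst powr_power) auto
    finally show ?thesis .
  qed
  also have "(\<Prod>b\<in>Basis. exp (- (u \<bullet> b)\<^sup>2 / 2)) = exp (\<Sum>b\<in>Basis. - (u \<bullet> b)\<^sup>2 / 2)"
    by (rule exp_sum[symmetric]) simp
  also have "(\<Sum>b\<in>Basis. - (u \<bullet> b)\<^sup>2 / 2) = - (norm u)\<^sup>2 / 2"
  proof -
    have "(\<Sum>b\<in>Basis. - (u \<bullet> b)\<^sup>2 / 2) = (\<Sum>b\<in>Basis. (-1/2) * (u \<bullet> b)\<^sup>2)"
      by (rule sum.cong) auto
    also have "\<dots> = (-1/2) * (\<Sum>b\<in>Basis. (u \<bullet> b)\<^sup>2)"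
      by (rule sum_distrib_left[symmetric])
    finally show ?thesis unfolding norm2_sum_basis by simp
  qed
  also have "(2 * pi) powr (- real DIM('a) / 2) * exp (- (norm u)\<^sup>2 / 2) = std_gauss_density u"
    by (rule std_gauss_density_def[symmetric])
  finally show ?thesis by (rule sym)
qed

lemma integral_lborel_prod:
  fixes f :: "'a::euclidean_space \<Rightarrow> real \<Rightarrow> real"
  assumes int: "\<And>b. b \<in> Basis \<Longrightarrow> integrable lborel (f b)"
  shows "integrable lborel (\<lambda>x::'a. \<Prod>b\<in>Basis. f b (x \<bullet> b))"
    and "(\<integral>x. (\<Prod>b\<in>Basis. f b (x \<bullet> b)) \<partial>(lborel::'a measure)) = (\<Prod>b\<in>Basis. \<integral>x. f b x \<partial>lborel)"
proof -
  interpret P: product_sigma_finite "\<lambda>_::'a. lborel::real measure" by unfold_locales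
  define T where "T = (\<lambda>g::'a \<Rightarrow> real. \<Sum>b\<in>Basis. g b *\<^sub>R b)"
  have Tm: "T \<in> borel_measurable (\<Pi>\<^sub>M b\<in>Basis. lborel)" unfolding T_def by measurable
  have Tb: "T g \<bullet> b = g b" if "b \<in> Basis" for g b
    using that by (simp add: T_def inner_sum_left inner_Basis if_distrib cong: if_cong)
  have LB: "(lborel::'a measure) = distr (\<Pi>\<^sub>M b\<in>Basis. lborel) borel T"
    unfolding T_def by (rule lborel_eq)
  have fm: "f b \<in> borel_measurable borel" if "b \<in> Basis" for b
    using int[OF that] by auto
  have gm: "(\<lambda>x::'a. \<Prod>b\<in>Basis. f b (x \<bullet> b)) \<in> borel_measurable borel"
    using fm by (intro borel_measurable_prod) (auto intro: measurable_compose[OF borel_measurable_inner])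
  have eq: "\<And>g. g \<in> space (\<Pi>\<^sub>M b\<in>Basis. lborel) \<Longrightarrow> (\<Prod>b\<in>Basis. f b (T g \<bullet> b)) = (\<Prod>b\<in>Basis. f b (g b))"
    by (simp add: Tb)
  have pint: "integrable (\<Pi>\<^sub>M b\<in>Basis. lborel) (\<lambda>g. \<Prod>b\<in>Basis. f b (g b))"
    by (rule P.product_integrable_prod) (auto intro: int)
  have "integrable (\<Pi>\<^sub>M b\<in>Basis. lborel) (\<lambda>g. \<Prod>b\<in>Basis. f b (T g \<bullet> b))"
  proof -
    have "integrable (\<Pi>\<^sub>M b\<in>Basis. lborel) (\<lambda>g. \<Prod>b\<in>Basis. f b (T g \<bullet> b)) =
      integrable (\<Pi>\<^sub>M b\<in>Basis. lborel) (\<lambda>g. \<Prod>b\<in>Basis. f b (g b))"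
      by (rule Bochner_Integration.integrable_cong) (auto simp: Tb)
    with pint show ?thesis by simp
  qed
  then have "integrable (distr (\<Pi>\<^sub>M b\<in>Basis. lborel) borel T) (\<lambda>x::'a. \<Prod>b\<in>Basis. f b (x \<bullet> b))"
    by (subst integrable_distr_eq[OF Tm gm])
  then show "integrable lborel (\<lambda>x::'a. \<Prod>b\<in>Basis. f b (x \<bullet> b))"
    unfolding LB .
  have "(\<integral>x. (\<Prod>b\<in>Basis. f b (x \<bullet> b)) \<partial>(distr (\<Pi>\<^sub>M b\<in>Basis. lborel) borel T))
      = (\<integral>g. (\<Prod>b\<in>Basis. f b (T g \<bullet> b)) \<partial>(\<Pi>\<^sub>M b\<in>Basis. lborel))"
    by (rule integral_distr[OF Tm gm])
  also have "\<dots> = (\<integral>g. (\<Prod>b\<in>Basis. f b (g b)) \<partial>(\<Pi>\<^sub>M b\<in>Basis. lborel))"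
    by (rule Bochner_Integration.integral_cong[OF refl eq])
  also have "\<dots> = (\<Prod>b\<in>Basis. \<integral>x. f b x \<partial>lborel)"
    by (rule P.product_integral_prod) (auto intro: int)
  finally show "(\<integral>x. (\<Prod>b\<in>Basis. f b (x \<bullet> b)) \<partial>(lborel::'a measure)) = (\<Prod>b\<in>Basis. \<integral>x. f b x \<partial>lborel)"
    unfolding LB .
qed


lemma gd_nonneg[simp]: "0 \<le> std_gauss_density u"
  by (simp add: std_gauss_density_def)

lemma gd_meas[measurable]: "std_gauss_density \<in> borel_measurable borel"
  unfolding std_gauss_density_def[abs_def] by measurable

lemma gauss_moment_prod:
  fixes b c :: "'a::euclidean_space"
  assumes b: "b \<in> Basis" and c: "c \<in> Basis"
  shows "integrable lborel (\<lambda>u::'a. std_gauss_density u * ((u \<bullet> b) * (u \<bullet> c)))"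
    and "(\<integral>u. std_gauss_density u * ((u \<bullet> b) * (u \<bullet> c)) \<partial>(lborel::'a measure)) = (if b = c then 1 else 0)"
proof -
  define g where "g i x = std_normal_density x * (if i = b then x else 1) * (if i = c then x else 1)" for i :: 'a and x :: real
  have eq: "std_gauss_density u * ((u \<bullet> b) * (u \<bullet> c)) = (\<Prod>i\<in>Basis. g i (u \<bullet> i))" for u :: 'a
  proof -
    have "(\<Prod>i\<in>Basis. g i (u \<bullet> i)) = (\<Prod>i\<in>Basis. std_normal_density (u \<bullet> i)) *
       (\<Prod>i\<in>Basis. (if i = b then u \<bullet> i else 1)) * (\<Prod>i\<in>Basis. (if i = c then u \<bullet> i else 1))"
      unfolding g_def prod.distrib ..
    also have "\<dots> = std_gauss_density u * (u \<bullet> b) * (u \<bullet> c)"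
      using b c by (simp add: gauss_density_prod prod.delta)
    finally show ?thesis by simp
  qed
  have gi: "g i = (\<lambda>x. std_normal_density x * x ^ (if i = b then 1 else 0) * x ^ (if i = c then 1 else 0))" for i
    by (auto simp: g_def fun_eq_iff)
  have int: "integrable lborel (g i)" for i
  proof -
    have "g i = (\<lambda>x. std_normal_density x * x ^ ((if i = b then 1 else 0) + (if i = c then 1 else 0)))"
      unfolding gi by (simp add: power_add mult.assoc)
    then show ?thesis using integrable_std_normal_moment by simp
  qed
  show "integrable lborel (\<lambda>u::'a. std_gauss_density u * ((u \<bullet> b) * (u \<bullet> c)))"
    unfolding eq by (rule integral_lborel_prod(1)) (rule int)
  have "(\<integral>u. std_gauss_density u * ((u \<bullet> b) * (u \<bullet> c)) \<partial>(lborel::'a measure)) = (\<Prod>i\<in>Basis. \<integral>x. g i x \<partial>lborel)"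
    unfolding eq by (rule integral_lborel_prod(2)) (rule int)
  also have "\<dots> = (if b = c then 1 else 0)"
  proof (cases "b = c")
    case True
    have "(\<integral>x. g i x \<partial>lborel) = 1" for i
    proof (cases "i = b")
      case True
      then have "g i = (\<lambda>x. std_normal_density x * x ^ (2 * 1))" using \<open>b = c\<close>
        by (auto simp: g_def fun_eq_iff power2_eq_square)
      then show ?thesis using integral_std_normal_moment_even[of 1] by simp
    next
      case False
      then have "g i = std_normal_density" using \<open>b = c\<close> by (auto simp: g_def fun_eq_iff)
      then show ?thesis by simp
    qed
    then show ?thesis using True by simp
  next
    case False
    have "g b = (\<lambda>x. std_normal_density x * x ^ (2 * 0 + 1))" using False
      by (auto simp: g_def fun_eq_iff)
    then have "(\<integral>x. g b x \<partial>lborel) = 0" using integral_std_normal_moment_odd[of 0] by simp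
    then show ?thesis using False b by (auto intro!: prod_zero)
  qed
  finally show "(\<integral>u. std_gauss_density u * ((u \<bullet> b) * (u \<bullet> c)) \<partial>(lborel::'a measure)) = (if b = c then 1 else 0)" .
qed

lemma gauss_total:
  shows "integrable lborel (std_gauss_density :: 'a::euclidean_space \<Rightarrow> real)"
    and "(\<integral>u. std_gauss_density u \<partial>(lborel::'a measure)) = 1"
proof -
  have eq: "std_gauss_density = (\<lambda>u::'a. \<Prod>i\<in>Basis. std_normal_density (u \<bullet> i))"
    by (rule ext) (rule gauss_density_prod)
  show "integrable lborel (std_gauss_density :: 'a::euclidean_space \<Rightarrow> real)"
    unfolding eq by (rule integral_lborel_prod(1)) simp
  show "(\<integral>u. std_gauss_density u \<partial>(lborel::'a measure)) = 1"
    unfolding eq by (subst integral_lborel_prod(2)) simp_all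
qed

lemma prob_std_gauss: "prob_space (std_gauss :: 'a::euclidean_space measure)"
proof
  show "emeasure (std_gauss :: 'a measure) (space std_gauss) = 1"
    using gauss_total[where 'a='a]
    by (simp add: std_gauss_def emeasure_density nn_integral_eq_integral)
qed

lemma space_std_gauss[simp]: "space std_gauss = UNIV"
  by (simp add: std_gauss_def)

lemma sets_std_gauss[simp, measurable_cong]: "sets std_gauss = sets borel"
  by (simp add: std_gauss_def)

lemma integral_std_gauss:
  fixes g :: "'a::euclidean_space \<Rightarrow> 'b::{banach, second_countable_topology}"
  assumes "g \<in> borel_measurable borel"
  shows "integral\<^sup>L std_gauss g = (\<integral>u. std_gauss_density u *\<^sub>R g u \<partial>lborel)"
  unfolding std_gauss_def using assms
  by (subst integral_density) auto

lemma integrable_std_gauss: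
  fixes g :: "'a::euclidean_space \<Rightarrow> 'b::{banach, second_countable_topology}"
  assumes "g \<in> borel_measurable borel"
  shows "integrable std_gauss g \<longleftrightarrow> integrable lborel (\<lambda>u. std_gauss_density u *\<^sub>R g u)"
  unfolding std_gauss_def using assms
  by (subst integrable_density) auto


lemma gs_moment:
  fixes b c :: "'a::euclidean_space"
  assumes b: "b \<in> Basis" and c: "c \<in> Basis"
  shows "integrable std_gauss (\<lambda>u::'a. (u \<bullet> b) * (u \<bullet> c))"
    and "(\<integral>u. (u \<bullet> b) * (u \<bullet> c) \<partial>(std_gauss::'a measure)) = (if b = c then 1 else 0)"
  using gauss_moment_prod[OF b c]
  by (simp_all add: integrable_std_gauss integral_std_gauss)

lemma inner_sq_expand:
  fixes u w :: "'a::euclidean_space"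
  shows "(u \<bullet> w)\<^sup>2 = (\<Sum>b\<in>Basis. \<Sum>c\<in>Basis. ((w \<bullet> b) * (w \<bullet> c)) * ((u \<bullet> b) * (u \<bullet> c)))"
proof -
  have "u \<bullet> w = (\<Sum>b\<in>Basis. (u \<bullet> b) * (w \<bullet> b))" by (rule euclidean_inner)
  then have "(u \<bullet> w)\<^sup>2 = (\<Sum>b\<in>Basis. (u \<bullet> b) * (w \<bullet> b)) * (\<Sum>c\<in>Basis. (u \<bullet> c) * (w \<bullet> c))"
    by (simp add: power2_eq_square)
  also have "\<dots> = (\<Sum>b\<in>Basis. \<Sum>c\<in>Basis. ((u \<bullet> b) * (w \<bullet> b)) * ((u \<bullet> c) * (w \<bullet> c)))"
    by (rule sum_product)
  also have "\<dots> = (\<Sum>b\<in>Basis. \<Sum>c\<in>Basis. ((w \<bullet> b) * (w \<bullet> c)) * ((u \<bullet> b) * (u \<bullet> c)))"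
    by (simp add: ac_simps)
  finally show ?thesis .
qed

lemma gs_inner_sq:
  fixes w :: "'a::euclidean_space"
  shows "integrable std_gauss (\<lambda>u::'a. (u \<bullet> w)\<^sup>2)"
    and "(\<integral>u. (u \<bullet> w)\<^sup>2 \<partial>(std_gauss::'a measure)) = (norm w)\<^sup>2"
proof -
  have int: "integrable std_gauss (\<lambda>u::'a. ((w \<bullet> b) * (w \<bullet> c)) * ((u \<bullet> b) * (u \<bullet> c)))"
    if "b \<in> Basis" "c \<in> Basis" for b c
    using gs_moment(1)[OF that] by simp
  show "integrable std_gauss (\<lambda>u::'a. (u \<bullet> w)\<^sup>2)"
    unfolding inner_sq_expand by (auto intro!: Bochner_Integration.integrable_sum int)
  have "(\<integral>u. (u \<bullet> w)\<^sup>2 \<partial>(std_gauss::'a measure)) =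
     (\<Sum>b\<in>Basis. \<Sum>c\<in>Basis. \<integral>u. ((w \<bullet> b) * (w \<bullet> c)) * ((u \<bullet> b) * (u \<bullet> c)) \<partial>(std_gauss::'a measure))"
    unfolding inner_sq_expand
    apply (subst Bochner_Integration.integral_sum)
     apply (auto intro!: Bochner_Integration.integrable_sum int)[1]
    apply (intro sum.cong refl Bochner_Integration.integral_sum)
    apply (auto intro!: int)
    using gs_moment(1) by auto
  also have "\<dots> = (\<Sum>b\<in>Basis. \<Sum>c\<in>Basis. ((w \<bullet> b) * (w \<bullet> c)) * (if b = c then 1 else 0))"
    by (intro sum.cong refl) (simp add: gs_moment)
  also have "\<dots> = (\<Sum>b\<in>Basis. (w \<bullet> b)\<^sup>2)"
    by (intro sum.cong refl) (simp add: if_distrib power2_eq_square cong: if_cong)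
  also have "\<dots> = (norm w)\<^sup>2" by (simp add: norm2_sum_basis)
  finally show "(\<integral>u. (u \<bullet> w)\<^sup>2 \<partial>(std_gauss::'a measure)) = (norm w)\<^sup>2" .
qed

lemma gs_norm_sq:
  shows "integrable std_gauss (\<lambda>u::'a::euclidean_space. (norm u)\<^sup>2)"
    and "(\<integral>u. (norm u)\<^sup>2 \<partial>(std_gauss::'a measure)) = real DIM('a)"
proof -
  have int: "integrable std_gauss (\<lambda>u::'a. (u \<bullet> b) * (u \<bullet> b))" if "b \<in> Basis" for b
    using gs_moment(1)[OF that that] .
  have eq: "(norm u)\<^sup>2 = (\<Sum>b\<in>Basis. (u \<bullet> b) * (u \<bullet> b))" for u :: 'a
    unfolding norm2_sum_basis by (simp add: power2_eq_square)
  show "integrable std_gauss (\<lambda>u::'a::euclidean_space. (norm u)\<^sup>2)"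
    unfolding eq by (intro Bochner_Integration.integrable_sum int)
  show "(\<integral>u. (norm u)\<^sup>2 \<partial>(std_gauss::'a measure)) = real DIM('a)"
    unfolding eq by (subst Bochner_Integration.integral_sum) (auto intro: int simp: gs_moment)
qed

lemma gs_norm:
  shows "integrable std_gauss (\<lambda>u::'a::euclidean_space. norm u)"
    and "(\<integral>u. norm u \<partial>(std_gauss::'a measure)) \<le> (1 + real DIM('a)) / 2"
proof -
  interpret G: prob_space "std_gauss::'a measure" by (rule prob_std_gauss)
  have i2: "integrable std_gauss (\<lambda>u::'a. (1 + (norm u)\<^sup>2) / 2)"
    using gs_norm_sq(1) by auto
  have le: "norm u \<le> (1 + (norm u)\<^sup>2) / 2" for u :: 'a
    using sum_squares_bound[of 1 "norm u"] by (simp add: power2_eq_square)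
  have le': "norm u * 2 \<le> 1 + (norm u)\<^sup>2" for u :: 'a
    using le[of u] by simp
  show int: "integrable std_gauss (\<lambda>u::'a::euclidean_space. norm u)"
    by (rule Bochner_Integration.integrable_bound[OF i2]) (auto intro!: AE_I2 simp: le')
  have "(\<integral>u. norm u \<partial>(std_gauss::'a measure)) \<le> (\<integral>u. (1 + (norm u)\<^sup>2) / 2 \<partial>(std_gauss::'a measure))"
    by (intro integral_mono int i2 le)
  also have "\<dots> = (1 + real DIM('a)) / 2"
    using gs_norm_sq[where 'a='a] G.prob_space by (simp add: Bochner_Integration.integral_add)
  finally show "(\<integral>u. norm u \<partial>(std_gauss::'a measure)) \<le> (1 + real DIM('a)) / 2" .
qed

lemma exp_sub1_bound: "\<bar>exp z - 1\<bar> \<le> \<bar>z\<bar> * exp \<bar>z\<bar>" for z :: real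
proof (cases "z \<ge> 0")
  case True
  have h1: "1 - z \<le> exp (-z)" using exp_ge_add_one_self[of "-z"] by simp
  have "exp z * (1 - z) \<le> exp z * exp (-z)" by (rule mult_left_mono[OF h1]) simp
  then have "exp z - z * exp z \<le> 1" by (simp add: exp_minus field_simps)
  moreover have "1 \<le> exp z" using True by simp
  ultimately show ?thesis using True by simp
next
  case False
  have "1 + z \<le> exp z" by (rule exp_ge_add_one_self)
  moreover have "exp z \<le> 1" using False by simp
  moreover have "1 \<le> exp (-z)" using False by simp
  then have "-z \<le> -z * exp (-z)" using False by (simp add: mult_le_cancel_left1)
  moreover have "\<bar>exp z - 1\<bar> = 1 - exp z" using \<open>exp z \<le> 1\<close> by simp
  moreover have "\<bar>z\<bar> * exp \<bar>z\<bar> = -z * exp (-z)" using False by simp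
  ultimately show ?thesis by linarith
qed

lemma exp_taylor2: "\<bar>exp a - 1 - a\<bar> \<le> a\<^sup>2 * exp \<bar>a\<bar>" for a :: real
proof -
  have D: "\<And>s. DERIV (\<lambda>s. exp s - s) s :> exp s - 1"
    by (auto intro!: derivative_eq_intros)
  have main: "\<exists>z. \<bar>z\<bar> \<le> \<bar>a\<bar> \<and> exp a - 1 - a = a * (exp z - 1)"
  proof (cases "a = 0")
    case True then show ?thesis by (intro exI[of _ 0]) simp
  next
    case False
    show ?thesis
    proof (cases "a > 0")
      case True
      from MVT2[OF True D] obtain z where "0 < z" "z < a" "exp a - a - (exp 0 - 0) = (a - 0) * (exp z - 1)"
        by blast
      then show ?thesis by (intro exI[of _ z]) auto
    next
      case F: False
      then have "a < 0" using False by simp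
      from MVT2[OF this D] obtain z where "a < z" "z < 0" "exp 0 - 0 - (exp a - a) = (0 - a) * (exp z - 1)"
        by blast
      then show ?thesis by (intro exI[of _ z]) (auto simp: algebra_simps)
    qed
  qed
  then obtain z where z: "\<bar>z\<bar> \<le> \<bar>a\<bar>" "exp a - 1 - a = a * (exp z - 1)" by blast
  have "\<bar>exp z - 1\<bar> \<le> \<bar>a\<bar> * exp \<bar>a\<bar>"
    using exp_sub1_bound[of z] z(1)
    by (meson exp_ge_zero exp_le_cancel_iff abs_ge_zero mult_mono order_trans)
  then have "\<bar>a\<bar> * \<bar>exp z - 1\<bar> \<le> \<bar>a\<bar> * (\<bar>a\<bar> * exp \<bar>a\<bar>)"
    by (rule mult_left_mono) simp
  then show ?thesis using z(2) by (simp add: abs_mult power2_eq_square mult.assoc)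
qed

lemma gd_shift:
  "std_gauss_density (w - k) = std_gauss_density w * exp (w \<bullet> k - (norm k)\<^sup>2 / 2)"
proof -
  have "(norm (w - k))\<^sup>2 = (norm w)\<^sup>2 - 2 * (w \<bullet> k) + (norm k)\<^sup>2"
    by (simp add: power2_norm_eq_inner inner_diff_left inner_diff_right inner_commute)
  then have "- (norm (w - k))\<^sup>2 / 2 = - (norm w)\<^sup>2 / 2 + (w \<bullet> k - (norm k)\<^sup>2 / 2)"
    by (simp add: field_simps)
  then have E: "exp (- (norm (w - k))\<^sup>2 / 2) = exp (- (norm w)\<^sup>2 / 2) * exp (w \<bullet> k - (norm k)\<^sup>2 / 2)"
    by (simp only: exp_add)
  show ?thesis unfolding std_gauss_density_def E by (simp only: mult.assoc)
qed

lemma kernel_taylor: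
  fixes w k :: "'a::euclidean_space"
  assumes k: "norm k \<le> 1"
  shows "\<bar>std_gauss_density (w - k) - std_gauss_density w - std_gauss_density w * (w \<bullet> k)\<bar>
     \<le> (norm k)\<^sup>2 * (std_gauss_density w * ((norm w + 1)\<^sup>2 * exp (norm w + 1) + 1))"
proof -
  define a where "a = w \<bullet> k - (norm k)\<^sup>2 / 2"
  have eq: "std_gauss_density (w - k) - std_gauss_density w - std_gauss_density w * (w \<bullet> k)
     = std_gauss_density w * ((exp a - 1 - a) - (norm k)\<^sup>2 / 2)"
    by (simp add: gd_shift a_def algebra_simps)
  have nk: "0 \<le> norm k" by simp
  have k2: "(norm k)\<^sup>2 \<le> norm k" using k nk by (simp add: power2_eq_square mult_le_cancel_right1 mult_left_le)
  have cs: "\<bar>w \<bullet> k\<bar> \<le> norm w * norm k" by (rule Cauchy_Schwarz_ineq2)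
  have aa': "\<bar>a\<bar> \<le> norm k * (norm w + 1)"
  proof -
    have "\<bar>a\<bar> \<le> \<bar>w \<bullet> k\<bar> + (norm k)\<^sup>2 / 2" unfolding a_def by (rule order_trans[OF abs_triangle_ineq4]) simp
    also have "\<dots> \<le> norm w * norm k + norm k" using cs k2 zero_le_power2[of "norm k"] by linarith
    finally show ?thesis by (simp add: algebra_simps)
  qed
  have a2: "a\<^sup>2 \<le> (norm k)\<^sup>2 * (norm w + 1)\<^sup>2"
  proof -
    have "\<bar>a\<bar>\<^sup>2 \<le> (norm k * (norm w + 1))\<^sup>2" by (rule power_mono[OF aa']) simp
    then show ?thesis by (simp add: power_mult_distrib)
  qed
  have ea: "exp \<bar>a\<bar> \<le> exp (norm w + 1)"
  proof -
    have "norm k * (norm w + 1) \<le> 1 * (norm w + 1)" by (rule mult_right_mono[OF k]) simp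
    then show ?thesis using aa' by simp
  qed
  have t1: "\<bar>exp a - 1 - a\<bar> \<le> (norm k)\<^sup>2 * ((norm w + 1)\<^sup>2 * exp (norm w + 1))"
  proof -
    have "\<bar>exp a - 1 - a\<bar> \<le> a\<^sup>2 * exp \<bar>a\<bar>" by (rule exp_taylor2)
    also have "\<dots> \<le> ((norm k)\<^sup>2 * (norm w + 1)\<^sup>2) * exp (norm w + 1)"
      by (rule mult_mono[OF a2 ea]) simp_all
    finally show ?thesis by (simp add: mult.assoc)
  qed
  have t2: "\<bar>(exp a - 1 - a) - (norm k)\<^sup>2 / 2\<bar> \<le> (norm k)\<^sup>2 * ((norm w + 1)\<^sup>2 * exp (norm w + 1) + 1)"
  proof -
    have "\<bar>(exp a - 1 - a) - (norm k)\<^sup>2 / 2\<bar> \<le> \<bar>exp a - 1 - a\<bar> + \<bar>(norm k)\<^sup>2 / 2\<bar>"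
      by (rule abs_triangle_ineq4)
    moreover have "\<bar>(norm k)\<^sup>2 / 2\<bar> = (norm k)\<^sup>2 / 2" by simp
    moreover have "(norm k)\<^sup>2 * ((norm w + 1)\<^sup>2 * exp (norm w + 1) + 1) =
       (norm k)\<^sup>2 * ((norm w + 1)\<^sup>2 * exp (norm w + 1)) + (norm k)\<^sup>2" by (simp add: algebra_simps)
    ultimately show ?thesis using t1 zero_le_power2[of "norm k"] by linarith
  qed
  have "\<bar>std_gauss_density w * ((exp a - 1 - a) - (norm k)\<^sup>2 / 2)\<bar>
      = std_gauss_density w * \<bar>(exp a - 1 - a) - (norm k)\<^sup>2 / 2\<bar>" by (simp add: abs_mult std_gauss_density_def)
  also have "\<dots> \<le> std_gauss_density w * ((norm k)\<^sup>2 * ((norm w + 1)\<^sup>2 * exp (norm w + 1) + 1))"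
    by (rule mult_left_mono[OF t2]) simp
  finally show ?thesis unfolding eq by (simp add: ac_simps)
qed

lemma Q_bound: "(r + 1)\<^sup>2 * exp (r + 1) + 1 \<le> (18 * exp 3 + 1) * exp (r\<^sup>2 / 4)" for r :: real
proof -
  have e1: "exp (r + 1) \<le> exp 3 * exp (r\<^sup>2 / 8)"
  proof -
    have "0 \<le> (r - 4)\<^sup>2" by simp
    then have "r + 1 \<le> 3 + r\<^sup>2 / 8" by (simp add: power2_eq_square algebra_simps)
    then show ?thesis by (simp add: exp_add[symmetric])
  qed
  have x: "r\<^sup>2 / 8 \<le> exp (r\<^sup>2 / 8)" using exp_ge_add_one_self[of "r\<^sup>2/8"] by linarith
  have one: "1 \<le> exp (r\<^sup>2 / 8)" by simp
  have e2: "(r + 1)\<^sup>2 \<le> 18 * exp (r\<^sup>2 / 8)"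
  proof -
    have "0 \<le> (r - 1)\<^sup>2" by simp
    then have "(r + 1)\<^sup>2 \<le> 2 * r\<^sup>2 + 2" by (simp add: power2_eq_square algebra_simps)
    then show ?thesis using x one by linarith
  qed
  have "(r + 1)\<^sup>2 * exp (r + 1) \<le> (18 * exp (r\<^sup>2 / 8)) * (exp 3 * exp (r\<^sup>2 / 8))"
    by (rule mult_mono[OF e2 e1]) simp_all
  also have "\<dots> = 18 * exp 3 * exp (r\<^sup>2 / 4)"
    by (simp add: exp_add[symmetric])
  finally have "(r + 1)\<^sup>2 * exp (r + 1) \<le> 18 * exp 3 * exp (r\<^sup>2 / 4)" .
  moreover have "1 \<le> exp (r\<^sup>2 / 4)" by simp
  moreover have "(18 * exp 3 + 1) * exp (r\<^sup>2 / 4) = 18 * exp 3 * exp (r\<^sup>2 / 4) + exp (r\<^sup>2 / 4)"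
    by (simp add: algebra_simps)
  ultimately show ?thesis by linarith
qed


lemma psi_integrable: "integrable lborel (\<lambda>w::'a::euclidean_space. exp (- (norm w)\<^sup>2 / 4))"
proof -
  have e1: "exp (- x\<^sup>2 / 4) = sqrt (4 * pi) * normal_density 0 (sqrt 2) x" for x :: real
  proof -
    have "sqrt (2 * pi * (sqrt 2)\<^sup>2) = sqrt (4 * pi)" by simp
    then show ?thesis by (simp add: normal_density_def)
  qed
  have i1: "integrable lborel (\<lambda>x::real. exp (- x\<^sup>2 / 4))"
    unfolding e1 by (intro integrable_mult_right integrable_normal_density) simp
  have eq: "exp (- (norm w)\<^sup>2 / 4) = (\<Prod>b\<in>Basis. exp (- (w \<bullet> b)\<^sup>2 / 4))" for w :: 'a
  proof -
    have "(\<Prod>b\<in>Basis. exp (- (w \<bullet> b)\<^sup>2 / 4)) = exp (\<Sum>b\<in>Basis. - (w \<bullet> b)\<^sup>2 / 4)"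
      by (rule exp_sum[symmetric]) simp
    also have "(\<Sum>b\<in>Basis. - (w \<bullet> b)\<^sup>2 / 4) = (\<Sum>b\<in>Basis. (-1/4) * (w \<bullet> b)\<^sup>2)"
      by (rule sum.cong) auto
    also have "\<dots> = (-1/4) * (\<Sum>b\<in>Basis. (w \<bullet> b)\<^sup>2)"
      by (rule sum_distrib_left[symmetric])
    also have "\<dots> = - (norm w)\<^sup>2 / 4" unfolding norm2_sum_basis by simp
    finally show ?thesis by simp
  qed
  show ?thesis unfolding eq by (rule integral_lborel_prod(1)) (rule i1)
qed

lemma M_integrable:
  "integrable lborel (\<lambda>w::'a::euclidean_space. std_gauss_density w * ((norm w + 1)\<^sup>2 * exp (norm w + 1) + 1))"
proof -
  define c where "c = (2 * pi) powr (- real DIM('a) / 2)"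
  have c0: "0 \<le> c" unfolding c_def by simp
  have bnd: "std_gauss_density w * ((norm w + 1)\<^sup>2 * exp (norm w + 1) + 1)
      \<le> c * (18 * exp 3 + 1) * exp (- (norm w)\<^sup>2 / 4)" for w :: 'a
  proof -
    have "std_gauss_density w * ((norm w + 1)\<^sup>2 * exp (norm w + 1) + 1)
        \<le> std_gauss_density w * ((18 * exp 3 + 1) * exp ((norm w)\<^sup>2 / 4))"
      by (rule mult_left_mono[OF Q_bound]) simp
    also have "\<dots> = c * (18 * exp 3 + 1) * (exp (- (norm w)\<^sup>2 / 2) * exp ((norm w)\<^sup>2 / 4))"
      by (simp add: std_gauss_density_def c_def)
    also have "exp (- (norm w)\<^sup>2 / 2) * exp ((norm w)\<^sup>2 / 4) = exp (- (norm w)\<^sup>2 / 4)"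
      by (simp add: exp_add[symmetric])
    finally show ?thesis .
  qed
  show ?thesis
  proof (rule Bochner_Integration.integrable_bound)
    show "integrable lborel (\<lambda>w::'a. c * (18 * exp 3 + 1) * exp (- (norm w)\<^sup>2 / 4))"
      by (intro integrable_mult_right psi_integrable)
    show "(\<lambda>w::'a. std_gauss_density w * ((norm w + 1)\<^sup>2 * exp (norm w + 1) + 1)) \<in> borel_measurable lborel"
      by measurable
    show "AE w in lborel. norm (std_gauss_density w * ((norm w + 1)\<^sup>2 * exp (norm w + 1) + 1))
        \<le> norm (c * (18 * exp 3 + 1) * exp (- (norm (w::'a))\<^sup>2 / 4))"
    proof (intro AE_I2)
      fix w :: 'a
      have "0 \<le> std_gauss_density w * ((norm w + 1)\<^sup>2 * exp (norm w + 1) + 1)" by simp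
      moreover have "0 \<le> c * (18 * exp 3 + 1) * exp (- (norm (w::'a))\<^sup>2 / 4)" using c0 by simp
      ultimately show "norm (std_gauss_density w * ((norm w + 1)\<^sup>2 * exp (norm w + 1) + 1))
        \<le> norm (c * (18 * exp 3 + 1) * exp (- (norm (w::'a))\<^sup>2 / 4))"
        using bnd[of w] by simp
    qed
  qed
qed


lemma kernel_deriv:
  fixes e :: "'a::euclidean_space \<Rightarrow> real"
  assumes em[measurable]: "e \<in> borel_measurable borel" and eb: "\<And>y. \<bar>e y\<bar> \<le> B" and t: "0 < t"
  shows "GDERIV (\<lambda>y. gauss_smooth e y t) x :> ((1/t) *\<^sub>R (\<integral>u. e (x + t *\<^sub>R u) *\<^sub>R u \<partial>std_gauss))"
proof -
  interpret G: prob_space "std_gauss::'a measure" by (rule prob_std_gauss)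
  have B0: "0 \<le> B" using eb[of 0] by linarith
  define E where "E w = e (x + t *\<^sub>R w)" for w
  have Em[measurable]: "E \<in> borel_measurable borel" unfolding E_def[abs_def] by measurable
  have Eb: "\<bar>E w\<bar> \<le> B" for w unfolding E_def by (rule eb)
  define M where "M w = std_gauss_density w * ((norm w + 1)\<^sup>2 * exp (norm w + 1) + 1)" for w :: 'a
  have Mint: "integrable lborel M" unfolding M_def[abs_def] by (rule M_integrable)
  have Mm[measurable]: "M \<in> borel_measurable borel" unfolding M_def[abs_def] by measurable
  have M0: "0 \<le> M w" for w unfolding M_def by simp
  define IM where "IM = (\<integral>w. M w \<partial>lborel)"
  have IM0: "0 \<le> IM" unfolding IM_def using M0 by simp
  have int_phi: "integrable lborel (std_gauss_density :: 'a \<Rightarrow> real)" by (rule gauss_total(1))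
  have int_phin: "integrable lborel (\<lambda>w::'a. std_gauss_density w * norm w)"
    using gs_norm(1)[where 'a='a] by (simp add: integrable_std_gauss)
  define V where "V = (\<integral>u. E u *\<^sub>R u \<partial>std_gauss)"
  have Vint: "integrable std_gauss (\<lambda>u. E u *\<^sub>R u)"
  proof (rule Bochner_Integration.integrable_bound)
    show "integrable std_gauss (\<lambda>u::'a. B * norm u)" by (intro integrable_mult_right gs_norm(1))
    show "(\<lambda>u. E u *\<^sub>R u) \<in> borel_measurable std_gauss" by measurable
    show "AE u in std_gauss. norm (E u *\<^sub>R u) \<le> norm (B * norm u)"
      using Eb B0 by (auto intro!: AE_I2 mult_right_mono)
  qed
  have Fx: "gauss_smooth e (x + h) t = (\<integral>w. std_gauss_density (w - (1/t) *\<^sub>R h) * E w \<partial>lborel)" for h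
  proof -
    let ?c = "(1/t) *\<^sub>R h"
    have tc: "t *\<^sub>R (?c + u) = h + t *\<^sub>R u" for u
      using t by (simp add: scaleR_add_right)
    have "gauss_smooth e (x + h) t = (\<integral>u. std_gauss_density u * e (x + h + t *\<^sub>R u) \<partial>lborel)"
      unfolding gauss_smooth_def by (subst integral_std_gauss) auto
    also have "\<dots> = (\<integral>w. std_gauss_density (w - ?c) * E w \<partial>(distr lborel borel ((+) ?c)))"
      by (subst integral_distr) (auto simp: E_def tc add.assoc)
    also have "\<dots> = (\<integral>w. std_gauss_density (w - ?c) * E w \<partial>lborel)"
      by (simp add: lborel_distr_plus)
    finally show ?thesis .
  qed
  have DV: "h \<bullet> ((1/t) *\<^sub>R V) = (\<integral>w. std_gauss_density w * (E w * (w \<bullet> ((1/t) *\<^sub>R h))) \<partial>lborel)" for h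
  proof -
    have "h \<bullet> V = (\<integral>u. h \<bullet> (E u *\<^sub>R u) \<partial>std_gauss)"
      unfolding V_def by (rule integral_inner_right[symmetric]) (rule Vint)
    also have "\<dots> = (\<integral>u. std_gauss_density u * (E u * (u \<bullet> h)) \<partial>lborel)"
      by (subst integral_std_gauss) (auto simp: inner_commute)
    finally have "h \<bullet> ((1/t) *\<^sub>R V) = (1/t) * (\<integral>u. std_gauss_density u * (E u * (u \<bullet> h)) \<partial>lborel)"
      by simp
    also have "\<dots> = (\<integral>u. (1/t) * (std_gauss_density u * (E u * (u \<bullet> h))) \<partial>lborel)"
      by (rule integral_mult_right_zero[symmetric])
    also have "\<dots> = (\<integral>w. std_gauss_density w * (E w * (w \<bullet> ((1/t) *\<^sub>R h))) \<partial>lborel)"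
      by (simp add: ac_simps)
    finally show ?thesis .
  qed
  have est: "\<bar>gauss_smooth e (x + h) t - gauss_smooth e x t - h \<bullet> ((1/t) *\<^sub>R V)\<bar>
      \<le> B * IM * (norm h)\<^sup>2 / t\<^sup>2" if hn: "norm h \<le> t" for h
  proof -
    define k where "k = (1/t) *\<^sub>R h"
    have nk: "norm k = norm h / t" unfolding k_def using t by simp
    have k1: "norm k \<le> 1" unfolding nk using hn t by simp
    define R where "R w = E w * (std_gauss_density (w - k) - std_gauss_density w - std_gauss_density w * (w \<bullet> k))" for w
    have Rb: "\<bar>R w\<bar> \<le> B * (norm k)\<^sup>2 * M w" for w
    proof -
      have "\<bar>R w\<bar> = \<bar>E w\<bar> * \<bar>std_gauss_density (w - k) - std_gauss_density w - std_gauss_density w * (w \<bullet> k)\<bar>"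
        unfolding R_def by (simp add: abs_mult)
      also have "\<dots> \<le> B * ((norm k)\<^sup>2 * M w)"
        unfolding M_def by (rule mult_mono[OF Eb kernel_taylor[OF k1]]) (simp_all add: B0)
      finally show ?thesis by (simp add: mult.assoc)
    qed
    have Rm[measurable]: "R \<in> borel_measurable borel" unfolding R_def[abs_def] by measurable
    have Rint: "integrable lborel R"
    proof (rule Bochner_Integration.integrable_bound)
      show "integrable lborel (\<lambda>w. B * (norm k)\<^sup>2 * M w)" by (intro integrable_mult_right Mint)
      show "R \<in> borel_measurable lborel" by measurable
      show "AE w in lborel. norm (R w) \<le> norm (B * (norm k)\<^sup>2 * M w)"
        using Rb B0 M0 by (auto intro!: AE_I2)
    qed
    have i1: "integrable lborel (\<lambda>w. std_gauss_density w * E w)"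
    proof (rule Bochner_Integration.integrable_bound)
      show "integrable lborel (\<lambda>w::'a. B * std_gauss_density w)" by (intro integrable_mult_right int_phi)
      show "(\<lambda>w. std_gauss_density w * E w) \<in> borel_measurable lborel" by measurable
      show "AE w in lborel. norm (std_gauss_density w * E w) \<le> norm (B * std_gauss_density w)"
        using Eb B0 by (auto intro!: AE_I2 simp: abs_mult mult.commute[of B] intro: mult_left_mono)
    qed
    have i2: "integrable lborel (\<lambda>w. std_gauss_density w * (E w * (w \<bullet> k)))"
    proof (rule Bochner_Integration.integrable_bound)
      show "integrable lborel (\<lambda>w::'a. (B * norm k) * (std_gauss_density w * norm w))"
        by (intro integrable_mult_right int_phin)
      show "(\<lambda>w. std_gauss_density w * (E w * (w \<bullet> k))) \<in> borel_measurable lborel" by measurable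
      show "AE w in lborel. norm (std_gauss_density w * (E w * (w \<bullet> k))) \<le> norm ((B * norm k) * (std_gauss_density w * norm w))"
      proof (intro AE_I2)
        fix w :: 'a
        have "\<bar>E w * (w \<bullet> k)\<bar> \<le> B * (norm w * norm k)"
          unfolding abs_mult by (rule mult_mono[OF Eb Cauchy_Schwarz_ineq2]) (simp_all add: B0)
        then have "std_gauss_density w * \<bar>E w * (w \<bullet> k)\<bar> \<le> std_gauss_density w * (B * (norm w * norm k))"
          by (rule mult_left_mono) simp
        then show "norm (std_gauss_density w * (E w * (w \<bullet> k))) \<le> norm ((B * norm k) * (std_gauss_density w * norm w))"
          using B0 by (simp add: abs_mult ac_simps)
      qed
    qed
    have split: "std_gauss_density (w - k) * E w = R w + std_gauss_density w * E w + std_gauss_density w * (E w * (w \<bullet> k))" for w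
      unfolding R_def by (simp add: algebra_simps)
    have "gauss_smooth e (x + h) t = (\<integral>w. R w + std_gauss_density w * E w + std_gauss_density w * (E w * (w \<bullet> k)) \<partial>lborel)"
      unfolding Fx k_def[symmetric] split ..
    also have "\<dots> = (\<integral>w. R w \<partial>lborel) + (\<integral>w. std_gauss_density w * E w \<partial>lborel) + (\<integral>w. std_gauss_density w * (E w * (w \<bullet> k)) \<partial>lborel)"
      using Rint i1 i2 by (simp add: Bochner_Integration.integral_add)
    finally have eqF: "gauss_smooth e (x + h) t = (\<integral>w. R w \<partial>lborel) + (\<integral>w. std_gauss_density w * E w \<partial>lborel) + (\<integral>w. std_gauss_density w * (E w * (w \<bullet> k)) \<partial>lborel)" .
    have eq0: "gauss_smooth e x t = (\<integral>w. std_gauss_density w * E w \<partial>lborel)"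
      using Fx[of 0] by simp
    have "gauss_smooth e (x + h) t - gauss_smooth e x t - h \<bullet> ((1/t) *\<^sub>R V) = (\<integral>w. R w \<partial>lborel)"
      unfolding eqF eq0 DV k_def by simp
    then have "\<bar>gauss_smooth e (x + h) t - gauss_smooth e x t - h \<bullet> ((1/t) *\<^sub>R V)\<bar> = \<bar>\<integral>w. R w \<partial>lborel\<bar>" by simp
    also have "\<dots> \<le> (\<integral>w. \<bar>R w\<bar> \<partial>lborel)" by (rule integral_abs_bound)
    also have "\<dots> \<le> (\<integral>w. B * (norm k)\<^sup>2 * M w \<partial>lborel)"
      by (intro integral_mono Rb integrable_mult_right Mint) (simp add: Rint)
    also have "\<dots> = B * (norm k)\<^sup>2 * IM" unfolding IM_def by simp
    also have "\<dots> = B * IM * (norm h)\<^sup>2 / t\<^sup>2" unfolding nk by (simp add: power_divide)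
    finally show ?thesis .
  qed
  show ?thesis
    unfolding gderiv_def V_def[symmetric] E_def[symmetric]
  proof (subst has_derivative_at_alt, intro conjI allI impI bounded_linear_inner_left)
    fix \<epsilon> :: real assume ep: "\<epsilon> > 0"
    define d where "d = min t (\<epsilon> * t\<^sup>2 / (B * IM + 1))"
    have BI: "0 \<le> B * IM" using B0 IM0 by simp
    have d0: "d > 0" unfolding d_def using t ep BI by simp
    show "\<exists>d>0. \<forall>y. norm (y - x) < d \<longrightarrow>
        norm (gauss_smooth e y t - gauss_smooth e x t - (y - x) \<bullet> ((1/t) *\<^sub>R V)) \<le> \<epsilon> * norm (y - x)"
    proof (intro exI[of _ d] conjI allI impI d0)
      fix y assume yd: "norm (y - x) < d"
      define h where "h = y - x"
      have hn: "norm h \<le> t" using yd unfolding h_def d_def by simp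
      have hlt: "norm h < \<epsilon> * t\<^sup>2 / (B * IM + 1)" using yd unfolding h_def d_def by simp
      have pos: "0 < B * IM + 1" using BI by simp
      have hd: "norm h * (B * IM + 1) < \<epsilon> * t\<^sup>2"
        using hlt pos by (simp add: pos_less_divide_eq)
      have "norm h * (B * IM + 1) = B * IM * norm h + norm h" by (simp add: algebra_simps)
      then have hd2: "B * IM * norm h \<le> \<epsilon> * t\<^sup>2" using hd norm_ge_zero[of h] by linarith
      have "B * IM * (norm h)\<^sup>2 / t\<^sup>2 \<le> \<epsilon> * norm h"
      proof -
        have "(B * IM * norm h) * norm h \<le> (\<epsilon> * t\<^sup>2) * norm h" by (rule mult_right_mono[OF hd2]) simp
        then have "(B * IM * norm h) * norm h / t\<^sup>2 \<le> (\<epsilon> * t\<^sup>2) * norm h / t\<^sup>2"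
          by (rule divide_right_mono) simp
        moreover have "(B * IM * norm h) * norm h / t\<^sup>2 = B * IM * (norm h)\<^sup>2 / t\<^sup>2"
          by (simp add: power2_eq_square mult.assoc)
        moreover have "(\<epsilon> * t\<^sup>2) * norm h / t\<^sup>2 = \<epsilon> * norm h" using t by simp
        ultimately show ?thesis by simp
      qed
      moreover have "x + h = y" unfolding h_def by simp
      ultimately show "norm (gauss_smooth e y t - gauss_smooth e x t - (y - x) \<bullet> ((1/t) *\<^sub>R V)) \<le> \<epsilon> * norm (y - x)"
        using est[OF hn] unfolding h_def real_norm_def by simp
    qed
  qed
qed


lemma taylor1:
  fixes f :: "'a::euclidean_space \<Rightarrow> real"
  assumes grad: "\<forall>y. GDERIV f y :> gradf y"
    and smooth: "\<forall>y z. norm (gradf y - gradf z) \<le> L1 * norm (y - z)"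
    and L1: "0 \<le> L1"
  shows "\<bar>f (y + h) - f y - h \<bullet> gradf y\<bar> \<le> L1 * (norm h)\<^sup>2"
proof -
  define g where "g s = f (y + s *\<^sub>R h) - s * (h \<bullet> gradf y)" for s :: real
  define g' where "g' s = (\<lambda>ds::real. (ds *\<^sub>R h) \<bullet> gradf (y + s *\<^sub>R h) - ds * (h \<bullet> gradf y))" for s
  have der: "(g has_derivative g' s) (at s)" for s
  proof -
    have d1: "((\<lambda>s. y + s *\<^sub>R h) has_derivative (\<lambda>ds. ds *\<^sub>R h)) (at s)"
      by (auto intro!: derivative_eq_intros)
    have d2: "(f has_derivative (\<lambda>v. v \<bullet> gradf (y + s *\<^sub>R h))) (at (y + s *\<^sub>R h))"
      using grad unfolding gderiv_def by blast
    have d3: "((\<lambda>s. f (y + s *\<^sub>R h)) has_derivative (\<lambda>ds. (ds *\<^sub>R h) \<bullet> gradf (y + s *\<^sub>R h))) (at s)"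
      using diff_chain_at[OF d1 d2] by (simp add: o_def)
    have d4: "((\<lambda>s. s * (h \<bullet> gradf y)) has_derivative (\<lambda>ds. ds * (h \<bullet> gradf y))) (at s)"
      by (auto intro!: derivative_eq_intros)
    show ?thesis unfolding g_def[abs_def] g'_def by (rule has_derivative_diff[OF d3 d4])
  qed
  have cont: "continuous_on {0..1} g"
    by (rule continuous_at_imp_continuous_on) (auto intro: has_derivative_continuous[OF der])
  obtain z where z: "z \<in> {0<..<1}" "norm (g 1 - g 0) \<le> norm (g' z (1 - 0))"
    using mvt_general[OF zero_less_one cont der] by blast
  have "g 1 - g 0 = f (y + h) - f y - h \<bullet> gradf y" unfolding g_def by simp
  moreover have "g' z (1 - 0) = h \<bullet> (gradf (y + z *\<^sub>R h) - gradf y)"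
    unfolding g'_def by (simp add: inner_diff_right)
  moreover have "\<bar>h \<bullet> (gradf (y + z *\<^sub>R h) - gradf y)\<bar> \<le> L1 * (norm h)\<^sup>2"
  proof -
    have "\<bar>h \<bullet> (gradf (y + z *\<^sub>R h) - gradf y)\<bar> \<le> norm h * norm (gradf (y + z *\<^sub>R h) - gradf y)"
      by (rule Cauchy_Schwarz_ineq2)
    also have "\<dots> \<le> norm h * (L1 * norm ((y + z *\<^sub>R h) - y))"
      using smooth[rule_format, of "y + z *\<^sub>R h" y] by (intro mult_left_mono) auto
    also have "\<dots> = L1 * z * (norm h)\<^sup>2" using z(1) by (simp add: power2_eq_square)
    also have "\<dots> \<le> L1 * 1 * (norm h)\<^sup>2"
      using z(1) L1 by (intro mult_right_mono mult_left_mono) auto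
    finally show ?thesis by simp
  qed
  ultimately show ?thesis using z(2) by simp
qed

lemma direct_deriv:
  fixes f :: "'a::euclidean_space \<Rightarrow> real"
  assumes grad: "\<forall>y. GDERIV f y :> gradf y"
    and smooth: "\<forall>y z. norm (gradf y - gradf z) \<le> L1 * norm (y - z)"
    and L1: "0 \<le> L1"
    and lip: "\<forall>y z. \<bar>f y - f z\<bar> \<le> L0 * norm (y - z)"
    and t: "0 < t"
  shows "GDERIV (\<lambda>y. gauss_smooth f y t) x :> (\<integral>u. gradf (x + t *\<^sub>R u) \<partial>std_gauss)"
proof -
  interpret G: prob_space "std_gauss::'a measure" by (rule prob_std_gauss)
  have fc: "continuous_on UNIV f"
    using grad unfolding gderiv_def
    by (intro continuous_at_imp_continuous_on) (auto intro: has_derivative_continuous)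
  have fm[measurable]: "f \<in> borel_measurable borel" by (rule borel_measurable_continuous_onI[OF fc])
  have gc: "continuous_on UNIV gradf"
    by (rule lipschitz_on_continuous_on[of L1]) (rule lipschitz_onI, use smooth L1 in \<open>auto simp: dist_norm\<close>)
  have gm[measurable]: "gradf \<in> borel_measurable borel" by (rule borel_measurable_continuous_onI[OF gc])
  have ifz: "integrable std_gauss (\<lambda>u. f (z + t *\<^sub>R u))" for z
  proof (rule Bochner_Integration.integrable_bound)
    show "integrable std_gauss (\<lambda>u::'a. \<bar>f z\<bar> + \<bar>L0\<bar> * t * norm u)"
      by (intro Bochner_Integration.integrable_add G.integrable_const integrable_mult_right gs_norm(1))
    show "(\<lambda>u. f (z + t *\<^sub>R u)) \<in> borel_measurable std_gauss" by measurable
    show "AE u in std_gauss. norm (f (z + t *\<^sub>R u)) \<le> norm (\<bar>f z\<bar> + \<bar>L0\<bar> * t * norm u)"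
    proof (intro AE_I2)
      fix u :: 'a
      have "\<bar>f (z + t *\<^sub>R u) - f z\<bar> \<le> L0 * norm ((z + t *\<^sub>R u) - z)" using lip by blast
      also have "(z + t *\<^sub>R u) - z = t *\<^sub>R u" by simp
      finally have "\<bar>f (z + t *\<^sub>R u) - f z\<bar> \<le> L0 * norm (t *\<^sub>R u)" .
      also have "\<dots> \<le> \<bar>L0\<bar> * (t * norm u)" using t by (simp add: mult_right_mono)
      finally have "\<bar>f (z + t *\<^sub>R u)\<bar> \<le> \<bar>f z\<bar> + \<bar>L0\<bar> * t * norm u" by (simp add: mult.assoc)
      then show "norm (f (z + t *\<^sub>R u)) \<le> norm (\<bar>f z\<bar> + \<bar>L0\<bar> * t * norm u)" using t by simp
    qed
  qed
  have igz: "integrable std_gauss (\<lambda>u. gradf (x + t *\<^sub>R u))"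
  proof (rule Bochner_Integration.integrable_bound)
    show "integrable std_gauss (\<lambda>u::'a. norm (gradf x) + L1 * t * norm u)"
      by (intro Bochner_Integration.integrable_add G.integrable_const integrable_mult_right gs_norm(1))
    show "(\<lambda>u. gradf (x + t *\<^sub>R u)) \<in> borel_measurable std_gauss" by measurable
    show "AE u in std_gauss. norm (gradf (x + t *\<^sub>R u)) \<le> norm (norm (gradf x) + L1 * t * norm u)"
    proof (intro AE_I2)
      fix u :: 'a
      have "norm (gradf (x + t *\<^sub>R u) - gradf x) \<le> L1 * norm ((x + t *\<^sub>R u) - x)" using smooth by blast
      also have "(x + t *\<^sub>R u) - x = t *\<^sub>R u" by simp
      finally have "norm (gradf (x + t *\<^sub>R u) - gradf x) \<le> L1 * norm (t *\<^sub>R u)" .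
      then have "norm (gradf (x + t *\<^sub>R u)) \<le> norm (gradf x) + L1 * t * norm u"
        using t norm_triangle_sub[of "gradf (x + t *\<^sub>R u)" "gradf x"] by (simp add: mult.assoc)
      then show "norm (gradf (x + t *\<^sub>R u)) \<le> norm (norm (gradf x) + L1 * t * norm u)" using t L1 by simp
    qed
  qed
  define G where "G = (\<integral>u. gradf (x + t *\<^sub>R u) \<partial>std_gauss)"
  have est: "\<bar>gauss_smooth f (x + h) t - gauss_smooth f x t - h \<bullet> G\<bar> \<le> L1 * (norm h)\<^sup>2" for h
  proof -
    have ih: "integrable std_gauss (\<lambda>u. h \<bullet> gradf (x + t *\<^sub>R u))"
      using igz by (rule integrable_inner_right)
    have hG: "h \<bullet> G = (\<integral>u. h \<bullet> gradf (x + t *\<^sub>R u) \<partial>std_gauss)"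
      unfolding G_def by (rule integral_inner_right[symmetric]) (rule igz)
    have "gauss_smooth f (x + h) t - gauss_smooth f x t - h \<bullet> G =
        (\<integral>u. f (x + h + t *\<^sub>R u) - f (x + t *\<^sub>R u) - h \<bullet> gradf (x + t *\<^sub>R u) \<partial>std_gauss)"
      unfolding gauss_smooth_def hG
      using ifz[of "x + h"] ifz[of x] ih
      by (simp add: Bochner_Integration.integral_diff)
    also have "\<bar>\<dots>\<bar> \<le> (\<integral>u. \<bar>f (x + h + t *\<^sub>R u) - f (x + t *\<^sub>R u) - h \<bullet> gradf (x + t *\<^sub>R u)\<bar> \<partial>std_gauss)"
      by (rule integral_abs_bound)
    also have "\<dots> \<le> (\<integral>u. L1 * (norm h)\<^sup>2 \<partial>(std_gauss::'a measure))"
    proof (rule Bochner_Integration.integral_mono)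
      show "integrable std_gauss (\<lambda>u. \<bar>f (x + h + t *\<^sub>R u) - f (x + t *\<^sub>R u) - h \<bullet> gradf (x + t *\<^sub>R u)\<bar>)"
        using ifz[of "x + h"] ifz[of x] ih by auto
      show "integrable std_gauss (\<lambda>u::'a. L1 * (norm h)\<^sup>2)" by simp
      fix u :: 'a
      have eqx: "x + h + t *\<^sub>R u = (x + t *\<^sub>R u) + h" by (simp add: ac_simps)
      show "\<bar>f (x + h + t *\<^sub>R u) - f (x + t *\<^sub>R u) - h \<bullet> gradf (x + t *\<^sub>R u)\<bar> \<le> L1 * (norm h)\<^sup>2"
        unfolding eqx by (rule taylor1[OF grad smooth L1])
    qed
    also have "\<dots> = L1 * (norm h)\<^sup>2" using G.prob_space by simp
    finally show ?thesis .
  qed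
  show ?thesis
    unfolding gderiv_def G_def[symmetric]
  proof (subst has_derivative_at_alt, intro conjI allI impI bounded_linear_inner_left)
    fix \<epsilon> :: real assume ep: "\<epsilon> > 0"
    define d where "d = \<epsilon> / (L1 + 1)"
    have d0: "d > 0" unfolding d_def using ep L1 by simp
    show "\<exists>d>0. \<forall>y. norm (y - x) < d \<longrightarrow>
        norm (gauss_smooth f y t - gauss_smooth f x t - (y - x) \<bullet> G) \<le> \<epsilon> * norm (y - x)"
    proof (intro exI[of _ d] conjI allI impI d0)
      fix y assume yd: "norm (y - x) < d"
      define h where "h = y - x"
      have "norm h * (L1 + 1) < \<epsilon>" using yd L1 unfolding h_def d_def by (simp add: pos_less_divide_eq)
      moreover have "norm h * (L1 + 1) = L1 * norm h + norm h" by (simp add: algebra_simps)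
      ultimately have "L1 * norm h \<le> \<epsilon>" using norm_ge_zero[of h] by linarith
      then have "(L1 * norm h) * norm h \<le> \<epsilon> * norm h" by (rule mult_right_mono) simp
      then have b: "L1 * (norm h)\<^sup>2 \<le> \<epsilon> * norm h" by (simp add: power2_eq_square mult.assoc)
      have "x + h = y" unfolding h_def by simp
      then show "norm (gauss_smooth f y t - gauss_smooth f x t - (y - x) \<bullet> G) \<le> \<epsilon> * norm (y - x)"
        using est[of h] b unfolding h_def real_norm_def by simp
    qed
  qed
qed

lemma V_bound:
  fixes E :: "'a::euclidean_space \<Rightarrow> real"
  assumes Em[measurable]: "E \<in> borel_measurable borel" and Eb: "\<And>u. \<bar>E u\<bar> \<le> B"
  shows "norm (\<integral>u. E u *\<^sub>R u \<partial>std_gauss) \<le> B"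
proof -
  interpret G: prob_space "std_gauss::'a measure" by (rule prob_std_gauss)
  have B0: "0 \<le> B" using Eb[of 0] by linarith
  define V where "V = (\<integral>u. E u *\<^sub>R u \<partial>std_gauss)"
  have Vint: "integrable std_gauss (\<lambda>u. E u *\<^sub>R u)"
  proof (rule Bochner_Integration.integrable_bound)
    show "integrable std_gauss (\<lambda>u::'a. B * norm u)" by (intro integrable_mult_right gs_norm(1))
    show "(\<lambda>u. E u *\<^sub>R u) \<in> borel_measurable std_gauss" by measurable
    show "AE u in std_gauss. norm (E u *\<^sub>R u) \<le> norm (B * norm u)"
      using Eb B0 by (auto intro!: AE_I2 mult_right_mono)
  qed
  show ?thesis
  proof (cases "V = 0")
    case True then show ?thesis using B0 unfolding V_def by simp
  next
    case False
    define n where "n = norm V"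
    have n0: "0 < n" using False unfolding n_def by simp
    have i1: "integrable std_gauss (\<lambda>u. E u * (u \<bullet> V))"
      using integrable_inner_left[OF Vint, of V] by simp
    have i2: "integrable std_gauss (\<lambda>u. B * (((u \<bullet> V)\<^sup>2 / n + n) / 2))"
      using gs_inner_sq(1)[of V] by auto
    have VV: "V \<bullet> V = (\<integral>u. E u * (u \<bullet> V) \<partial>std_gauss)"
    proof -
      have "V \<bullet> V = (\<integral>u. (E u *\<^sub>R u) \<bullet> V \<partial>std_gauss)"
        unfolding V_def by (rule integral_inner_left[symmetric]) (rule Vint)
      then show ?thesis by simp
    qed
    have pt: "E u * (u \<bullet> V) \<le> B * (((u \<bullet> V)\<^sup>2 / n + n) / 2)" for u
    proof -
      have "E u * (u \<bullet> V) \<le> B * \<bar>u \<bullet> V\<bar>"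
      proof -
        have "E u * (u \<bullet> V) \<le> \<bar>E u\<bar> * \<bar>u \<bullet> V\<bar>" by (metis abs_ge_self abs_mult)
        also have "\<dots> \<le> B * \<bar>u \<bullet> V\<bar>" by (rule mult_right_mono[OF Eb]) simp
        finally show ?thesis .
      qed
      moreover have "\<bar>u \<bullet> V\<bar> \<le> ((u \<bullet> V)\<^sup>2 / n + n) / 2"
      proof -
        have "0 \<le> (\<bar>u \<bullet> V\<bar> - n)\<^sup>2" by simp
        then have "2 * \<bar>u \<bullet> V\<bar> * n \<le> (u \<bullet> V)\<^sup>2 + n * n"
          by (simp add: power2_eq_square algebra_simps)
        then show ?thesis using n0 by (simp add: field_simps)
      qed
      ultimately show ?thesis using B0 by (meson mult_left_mono order_trans)
    qed
    have "n * n = V \<bullet> V" unfolding n_def by (simp add: dot_square_norm power2_eq_square)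
    also have "\<dots> \<le> (\<integral>u. B * (((u \<bullet> V)\<^sup>2 / n + n) / 2) \<partial>std_gauss)"
      unfolding VV by (rule integral_mono[OF i1 i2 pt])
    also have "\<dots> = B * (((\<integral>u. (u \<bullet> V)\<^sup>2 \<partial>std_gauss) / n + n) / 2)"
      using gs_inner_sq(1)[of V] G.prob_space by (simp add: Bochner_Integration.integral_add)
    also have "(\<integral>u. (u \<bullet> V)\<^sup>2 \<partial>std_gauss) = n * n"
      using gs_inner_sq(2)[of V] unfolding n_def by (simp add: power2_eq_square)
    also have "B * ((n * n / n + n) / 2) = B * n"
      using n0 by simp
    finally have "n * n \<le> B * n" .
    then show ?thesis using n0 unfolding V_def[symmetric] n_def[symmetric] by simp
  qed
qed


lemma wineq: "(a + b + c)\<^sup>2 \<le> 4 * a\<^sup>2 + 12/5 * b\<^sup>2 + 3 * c\<^sup>2" for a b c :: real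
proof -
  have "4 * a\<^sup>2 + 12/5 * b\<^sup>2 + 3 * c\<^sup>2 - (a + b + c)\<^sup>2 =
     (4*a - 12/5*b)\<^sup>2 * (5/48) + (4*a - 3*c)\<^sup>2 / 12 + (12/5*b - 3*c)\<^sup>2 * (5/36)"
    by (simp add: power2_eq_square field_simps)
  moreover have "0 \<le> (4*a - 12/5*b)\<^sup>2 * (5/48) + (4*a - 3*c)\<^sup>2 / 12 + (12/5*b - 3*c)\<^sup>2 * (5/36)"
    by simp
  ultimately show ?thesis by linarith
qed

lemma cube: "3 * (1 + d)\<^sup>2 \<le> 2 * (d + 6) ^ 3" if "0 \<le> d" for d :: real
proof -
  define s where "s = (d + 6)\<^sup>2"
  define c where "c = (d + 6) ^ 3"
  have s0: "0 \<le> s" unfolding s_def by simp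
  have "(1 + d)\<^sup>2 \<le> s" unfolding s_def using that by (intro power_mono) auto
  moreover have "s * 6 \<le> s * (d + 6)" using that s0 by (intro mult_left_mono) auto
  moreover have "s * (d + 6) = c" unfolding s_def c_def by (simp add: power2_eq_square power3_eq_cube)
  ultimately show ?thesis unfolding c_def[symmetric] using s0 by linarith
qed

theorem mainTheorem10:
  fixes f fp :: "'a::euclidean_space \<Rightarrow> real"
    and gradf :: "'a \<Rightarrow> 'a"
    and L0 L1 \<nu> t :: real and x :: 'a
  assumes lip: "\<forall>y z. \<bar>f y - f z\<bar> \<le> L0 * norm (y - z)"
    and grad: "\<forall>y. GDERIV f y :> gradf y"
    and smooth: "\<forall>y z. norm (gradf y - gradf z) \<le> L1 * norm (y - z)"
    and meas: "fp \<in> borel_measurable borel"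
    and approx: "\<forall>y. \<bar>f y - fp y\<bar> \<le> \<nu>"
    and tpos: "t > 0"
  shows "\<exists>D. GDERIV (\<lambda>y. gauss_smooth fp y t) x :> D \<and>
    (norm (gradf x))\<^sup>2 \<le> 4 * (norm D)\<^sup>2 + t\<^sup>2 / 2 * L1\<^sup>2 * (real DIM('a) + 6) ^ 3
      + 8 / pi * \<nu>\<^sup>2 / t\<^sup>2"
proof -
  interpret G: prob_space "std_gauss::'a measure" by (rule prob_std_gauss)
  obtain b0 :: 'a where b0: "b0 \<in> Basis" using nonempty_Basis by blast
  have L1: "0 \<le> L1"
  proof -
    have "norm (gradf b0 - gradf 0) \<le> L1 * norm (b0 - 0)" using smooth by blast
    then have "norm (gradf b0 - gradf 0) \<le> L1" using b0 by simp
    then show ?thesis using norm_ge_zero[of "gradf b0 - gradf 0"] by linarith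
  qed
  have nu: "0 \<le> \<nu>" using approx by (meson abs_ge_zero order_trans)
  have fc: "continuous_on UNIV f"
    using grad unfolding gderiv_def
    by (intro continuous_at_imp_continuous_on) (auto intro: has_derivative_continuous)
  have fm[measurable]: "f \<in> borel_measurable borel" by (rule borel_measurable_continuous_onI[OF fc])
  have gc: "continuous_on UNIV gradf"
    by (rule lipschitz_on_continuous_on[of L1]) (rule lipschitz_onI, use smooth L1 in \<open>auto simp: dist_norm\<close>)
  have gm[measurable]: "gradf \<in> borel_measurable borel" by (rule borel_measurable_continuous_onI[OF gc])
  have fpm[measurable]: "fp \<in> borel_measurable borel" by (rule meas)
  define e where "e y = fp y - f y" for y
  have em[measurable]: "e \<in> borel_measurable borel" unfolding e_def[abs_def] by measurable
  have eb: "\<bar>e y\<bar> \<le> \<nu>" for y unfolding e_def using approx by (simp add: abs_minus_commute)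
  define De where "De = (1/t) *\<^sub>R (\<integral>u. e (x + t *\<^sub>R u) *\<^sub>R u \<partial>std_gauss)"
  define G where "G = (\<integral>u. gradf (x + t *\<^sub>R u) \<partial>std_gauss)"
  have dE: "GDERIV (\<lambda>y. gauss_smooth e y t) x :> De"
    unfolding De_def by (rule kernel_deriv[OF em eb tpos])
  have dF: "GDERIV (\<lambda>y. gauss_smooth f y t) x :> G"
    unfolding G_def by (rule direct_deriv[OF grad smooth L1 lip tpos])
  have ifz: "integrable std_gauss (\<lambda>u. f (z + t *\<^sub>R u))" for z
  proof (rule Bochner_Integration.integrable_bound)
    show "integrable std_gauss (\<lambda>u::'a. \<bar>f z\<bar> + \<bar>L0\<bar> * t * norm u)"
      by (intro Bochner_Integration.integrable_add G.integrable_const integrable_mult_right gs_norm(1))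
    show "(\<lambda>u. f (z + t *\<^sub>R u)) \<in> borel_measurable std_gauss" by measurable
    show "AE u in std_gauss. norm (f (z + t *\<^sub>R u)) \<le> norm (\<bar>f z\<bar> + \<bar>L0\<bar> * t * norm u)"
    proof (intro AE_I2)
      fix u :: 'a
      have "\<bar>f (z + t *\<^sub>R u) - f z\<bar> \<le> L0 * norm ((z + t *\<^sub>R u) - z)" using lip by blast
      also have "(z + t *\<^sub>R u) - z = t *\<^sub>R u" by simp
      also have "L0 * norm (t *\<^sub>R u) \<le> \<bar>L0\<bar> * (t * norm u)" using tpos by (simp add: mult_right_mono)
      finally have "\<bar>f (z + t *\<^sub>R u)\<bar> \<le> \<bar>f z\<bar> + \<bar>L0\<bar> * t * norm u" by (simp add: mult.assoc)
      then show "norm (f (z + t *\<^sub>R u)) \<le> norm (\<bar>f z\<bar> + \<bar>L0\<bar> * t * norm u)" using tpos by simp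
    qed
  qed
  have iez: "integrable std_gauss (\<lambda>u. e (z + t *\<^sub>R u))" for z
  proof (rule Bochner_Integration.integrable_bound)
    show "integrable std_gauss (\<lambda>u::'a. \<nu>)" by simp
    show "(\<lambda>u. e (z + t *\<^sub>R u)) \<in> borel_measurable std_gauss" by measurable
    show "AE u in std_gauss. norm (e (z + t *\<^sub>R u)) \<le> norm \<nu>"
      using eb nu by (auto intro!: AE_I2)
  qed
  have sum: "gauss_smooth fp y t = gauss_smooth f y t + gauss_smooth e y t" for y
  proof -
    have "gauss_smooth fp y t = (\<integral>u. f (y + t *\<^sub>R u) + e (y + t *\<^sub>R u) \<partial>std_gauss)"
      unfolding gauss_smooth_def e_def by simp
    also have "\<dots> = gauss_smooth f y t + gauss_smooth e y t"
      unfolding gauss_smooth_def by (rule Bochner_Integration.integral_add[OF ifz iez])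
    finally show ?thesis .
  qed
  have dD: "GDERIV (\<lambda>y. gauss_smooth fp y t) x :> G + De"
  proof -
    have "((\<lambda>y. gauss_smooth f y t + gauss_smooth e y t) has_derivative (\<lambda>h. h \<bullet> G + h \<bullet> De)) (at x)"
      using dF dE unfolding gderiv_def by (rule has_derivative_add)
    moreover have "(\<lambda>y. gauss_smooth fp y t) = (\<lambda>y. gauss_smooth f y t + gauss_smooth e y t)"
      using sum by (rule ext)
    ultimately show ?thesis unfolding gderiv_def by (simp add: inner_add_right)
  qed
  have hDe: "norm De \<le> \<nu> / t"
  proof -
    have "norm (\<integral>u. e (x + t *\<^sub>R u) *\<^sub>R u \<partial>std_gauss) \<le> \<nu>"
      by (rule V_bound) (auto intro: eb)
    then show ?thesis unfolding De_def using tpos by (simp add: divide_right_mono)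
  qed
  have hG: "norm (gradf x - G) \<le> L1 * t * ((1 + real DIM('a)) / 2)"
  proof -
    have igz: "integrable std_gauss (\<lambda>u. gradf (x + t *\<^sub>R u))"
    proof (rule Bochner_Integration.integrable_bound)
      show "integrable std_gauss (\<lambda>u::'a. norm (gradf x) + L1 * t * norm u)"
        by (intro Bochner_Integration.integrable_add G.integrable_const integrable_mult_right gs_norm(1))
      show "(\<lambda>u. gradf (x + t *\<^sub>R u)) \<in> borel_measurable std_gauss" by measurable
      show "AE u in std_gauss. norm (gradf (x + t *\<^sub>R u)) \<le> norm (norm (gradf x) + L1 * t * norm u)"
      proof (intro AE_I2)
        fix u :: 'a
        have "norm (gradf (x + t *\<^sub>R u) - gradf x) \<le> L1 * norm ((x + t *\<^sub>R u) - x)" using smooth by blast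
        also have "(x + t *\<^sub>R u) - x = t *\<^sub>R u" by simp
        finally have "norm (gradf (x + t *\<^sub>R u) - gradf x) \<le> L1 * norm (t *\<^sub>R u)" .
        then have "norm (gradf (x + t *\<^sub>R u)) \<le> norm (gradf x) + L1 * t * norm u"
          using tpos norm_triangle_sub[of "gradf (x + t *\<^sub>R u)" "gradf x"] by (simp add: mult.assoc)
        then show "norm (gradf (x + t *\<^sub>R u)) \<le> norm (norm (gradf x) + L1 * t * norm u)" using tpos L1 by simp
      qed
    qed
    have pt: "norm (gradf x - gradf (x + t *\<^sub>R u)) \<le> L1 * t * norm u" for u
    proof -
      have "norm (gradf x - gradf (x + t *\<^sub>R u)) \<le> L1 * norm (x - (x + t *\<^sub>R u))" using smooth by blast
      then show ?thesis using tpos by (simp add: mult.assoc)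
    qed
    have "gradf x - G = (\<integral>u. gradf x - gradf (x + t *\<^sub>R u) \<partial>std_gauss)"
      unfolding G_def using igz G.prob_space by (simp add: Bochner_Integration.integral_diff)
    then have "norm (gradf x - G) \<le> (\<integral>u. norm (gradf x - gradf (x + t *\<^sub>R u)) \<partial>std_gauss)"
      by (simp add: integral_norm_bound)
    also have "\<dots> \<le> (\<integral>u. L1 * t * norm u \<partial>(std_gauss::'a measure))"
    proof (rule Bochner_Integration.integral_mono)
      show "integrable std_gauss (\<lambda>u. norm (gradf x - gradf (x + t *\<^sub>R u)))"
        using igz by auto
      show "integrable std_gauss (\<lambda>u::'a. L1 * t * norm u)" by (intro integrable_mult_right gs_norm(1))
    qed (rule pt)
    also have "\<dots> = L1 * t * (\<integral>u. norm u \<partial>(std_gauss::'a measure))" by simp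
    also have "\<dots> \<le> L1 * t * ((1 + real DIM('a)) / 2)"
      using L1 tpos by (intro mult_left_mono gs_norm(2)) auto
    finally show ?thesis .
  qed
  define a where "a = norm (G + De)"
  define \<beta> where "\<beta> = \<nu> / t"
  define \<gamma> where "\<gamma> = L1 * t * ((1 + real DIM('a)) / 2)"
  have tri: "norm (gradf x) \<le> a + \<beta> + \<gamma>"
  proof -
    have "gradf x = (G + De) - De + (gradf x - G)" by simp
    then have "norm (gradf x) \<le> norm ((G + De) - De) + norm (gradf x - G)"
      by (metis norm_triangle_ineq)
    also have "norm ((G + De) - De) \<le> norm (G + De) + norm De" by (rule norm_triangle_ineq4)
    finally show ?thesis using hDe hG unfolding a_def \<beta>_def \<gamma>_def by linarith
  qed
  have "(norm (gradf x))\<^sup>2 \<le> (a + \<beta> + \<gamma>)\<^sup>2"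
    by (rule power_mono[OF tri]) simp
  also have "\<dots> \<le> 4 * a\<^sup>2 + 12/5 * \<beta>\<^sup>2 + 3 * \<gamma>\<^sup>2" by (rule wineq)
  also have "12/5 * \<beta>\<^sup>2 \<le> 8 / pi * \<nu>\<^sup>2 / t\<^sup>2"
  proof -
    have "pi \<le> 10 / 3" using pi_approx(2) by simp
    then have "12/5 \<le> 8 / pi" by (simp add: field_simps)
    then have "12/5 * (\<nu>\<^sup>2 / t\<^sup>2) \<le> 8 / pi * (\<nu>\<^sup>2 / t\<^sup>2)"
      by (rule mult_right_mono) simp
    then show ?thesis unfolding \<beta>_def by (simp add: power_divide)
  qed
  also have "3 * \<gamma>\<^sup>2 \<le> t\<^sup>2 / 2 * L1\<^sup>2 * (real DIM('a) + 6) ^ 3"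
  proof -
    have "3 * (1 + real DIM('a))\<^sup>2 \<le> 2 * (real DIM('a) + 6) ^ 3" by (rule cube) simp
    then have "(L1 * t)\<^sup>2 * (3 * (1 + real DIM('a))\<^sup>2) \<le> (L1 * t)\<^sup>2 * (2 * (real DIM('a) + 6) ^ 3)"
      by (rule mult_left_mono) simp
    then have "(L1 * t)\<^sup>2 * (3 * (1 + real DIM('a))\<^sup>2) / 4 \<le> (L1 * t)\<^sup>2 * (2 * (real DIM('a) + 6) ^ 3) / 4"
      by (rule divide_right_mono) simp
    moreover have "3 * \<gamma>\<^sup>2 = (L1 * t)\<^sup>2 * (3 * (1 + real DIM('a))\<^sup>2) / 4"
      unfolding \<gamma>_def by (simp add: power_mult_distrib power_divide)
    moreover have "(L1 * t)\<^sup>2 * (2 * (real DIM('a) + 6) ^ 3) / 4 = t\<^sup>2 / 2 * L1\<^sup>2 * (real DIM('a) + 6) ^ 3"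
      by (simp add: power_mult_distrib)
    ultimately show ?thesis by simp
  qed
  finally have "(norm (gradf x))\<^sup>2 \<le> 4 * (norm (G + De))\<^sup>2 + t\<^sup>2 / 2 * L1\<^sup>2 * (real DIM('a) + 6) ^ 3
      + 8 / pi * \<nu>\<^sup>2 / t\<^sup>2" unfolding a_def by linarith
  then show ?thesis using dD by blast
qed

end
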